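(* Consider the ViSE model described in the context, with $n$ participants, $\ell$ egoists and $g=n-\ell$ group members ($1\le\ell\le n-1$), $\mu\in\mathbb{R}$, $\sigma>0$ and majority threshold $\alpha\in[0,1)$. Let $\delta=\ell/n$, $\gamma=\alpha+\delta-1$, $\beta=\ell/(n-\ell)$. Then the expected one-step capital increment of the society, as a function of the group's claims threshold $t\in\mathbb{R}$, reaches its maximum at $$t_0=\frac{\beta}{F_{\gamma n}-F_{\alpha n}}\Big(\mu^+(\mu,\sigma,\ell,\alpha n)-\mu^+(\mu,\sigma,\ell,\gamma n)\Big).$$
   Context: ViSE model (one voting step). A society consists of $n$ participants: $\ell$ "egoists" and $g=n-\ell$ "group members", $1\le\ell\le n-1$. Fix $\mu\in\mathbb{R}$, $\sigma>0$, a majority threshold $\alpha$ and a group claims threshold $t\in\mathbb{R}$. A proposal is a random vector $(\zeta_1,\dots,\zeta_n)$ of independent $N(\mu,\sigma^2)$ random variables, $\zeta_i$ being the proposed capital increment of participant $i$. Each egoist votes for the proposal iff his own component is strictly positive. All group members vote for the proposal iff the arithmetic mean of the group members' components is strictly greater than $t$; otherwise they all vote against. The proposal is accepted iff the number of votes for it is strictly greater than $\alpha n$. If accepted, each participant's capital increment equals his component; otherwise it is $0$. The expected one-step capital increment of the society is the expectation of the sum of all participants' increments (equivalently, up to the factor $n$, the expected increment of a uniformly randomly selected participant). $F$ denotes the standard normal distribution function. $p=F(\mu/\sigma)$, $q=1-p$, and for real $\xi$, $F_\xi=\sum_{x=\max(0,[\xi]+1)}^{\ell}\binom{\ell}{x}p^xq^{\ell-x}$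 ($[\xi]$ the integer part; empty sum $=0$), the probability that more than $\xi$ egoists vote for the proposal. For integer $\ell\ge1$ and real $\ell_0$, $\mu^+(\mu,\sigma,\ell,\ell_0)=\mathrm{M}\big(\xi_1\cdot\mathbf{1}\{\#\{i:\xi_i>0\}>\ell_0\}\big)$ where $\xi_1,\dots,\xi_\ell$ are i.i.d. $N(\mu,\sigma^2)$. *)

theory Defs
  imports "HOL-Probability.Probability"
begin

definition Phi :: "real \<Rightarrow> real" where
  "Phi x = cdf (density lborel std_normal_density) x"

definition iid_normal :: "nat \<Rightarrow> real \<Rightarrow> real \<Rightarrow> (nat \<Rightarrow> real) measure" where
  "iid_normal k mu sg = PiM {..<k} (\<lambda>_. density lborel (normal_density mu sg))"

definition F_xi :: "real \<Rightarrow> real \<Rightarrow> nat \<Rightarrow> real \<Rightarrow> real" where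
  "F_xi mu sg l xi =
     (let p = Phi (mu / sg); q = 1 - p in
      \<Sum>x \<in> {nat (max 0 (\<lfloor>xi\<rfloor> + 1))..l}. real (l choose x) * p ^ x * q ^ (l - x))"

definition mu_plus :: "real \<Rightarrow> real \<Rightarrow> nat \<Rightarrow> real \<Rightarrow> real" where
  "mu_plus mu sg l l0 =
     integral\<^sup>L (iid_normal l mu sg)
       (\<lambda>\<xi>. \<xi> 0 * (if real (card {i \<in> {..<l}. \<xi> i > 0}) > l0 then 1 else 0))"

(* Participants 0..<l are egoists, l..<n are group members. *)
definition votes_for :: "nat \<Rightarrow> nat \<Rightarrow> real \<Rightarrow> (nat \<Rightarrow> real) \<Rightarrow> nat" where
  "votes_for n l t \<zeta> =
     card {i \<in> {..<l}. \<zeta> i > 0}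
     + (if (\<Sum>i\<in>{l..<n}. \<zeta> i) / real (n - l) > t then n - l else 0)"

definition accepted :: "nat \<Rightarrow> nat \<Rightarrow> real \<Rightarrow> real \<Rightarrow> (nat \<Rightarrow> real) \<Rightarrow> bool" where
  "accepted n l alpha t \<zeta> \<longleftrightarrow> real (votes_for n l t \<zeta>) > alpha * real n"

definition expected_increment ::
    "nat \<Rightarrow> nat \<Rightarrow> real \<Rightarrow> real \<Rightarrow> real \<Rightarrow> real \<Rightarrow> real" where
  "expected_increment n l mu sg alpha t =
     integral\<^sup>L (iid_normal n mu sg)
       (\<lambda>\<zeta>. if accepted n l alpha t \<zeta> then (\<Sum>i\<in>{..<n}. \<zeta> i) else 0)"

end

theory Submission
  imports Defs
begin


abbreviation M0 :: "real \<Rightarrow> real \<Rightarrow> real measure" where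
  "M0 mu sg \<equiv> density lborel (normal_density mu sg)"

lemma M0_prob: "sg > 0 \<Longrightarrow> prob_space (M0 mu sg)"
  by (rule prob_space_normal_density)

lemma M0_integrable_id: "sg > 0 \<Longrightarrow> integrable (M0 mu sg) (\<lambda>x. x)"
  by (subst integrable_density) (auto intro: integrable_normal_moment_nz_1)

lemma M0_pos:
  assumes "sg > 0" and A[measurable]: "A \<in> sets borel" and "emeasure lborel A \<noteq> 0"
  shows "0 < measure (M0 mu sg) A"
proof -
  interpret prob_space "M0 mu sg" by (rule M0_prob) fact
  have "emeasure (M0 mu sg) A \<noteq> 0"
  proof
    assume "emeasure (M0 mu sg) A = 0"
    then have "(\<integral>\<^sup>+x. ennreal (normal_density mu sg x) * indicator A x \<partial>lborel) = 0"
      by (simp add: emeasure_density)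
    then have "AE x in lborel. ennreal (normal_density mu sg x) * indicator A x = 0"
      by (subst (asm) nn_integral_0_iff_AE) auto
    moreover have "\<And>x. normal_density mu sg x \<noteq> 0"
      using normal_density_pos[OF assms(1)] by (metis less_irrefl)
    ultimately have "AE x in lborel. x \<notin> A"
      by (auto elim!: eventually_mono simp: indicator_def)
    then have "emeasure lborel A = 0"
      by (subst (asm) AE_iff_measurable[OF _ refl]) auto
    with assms show False by simp
  qed
  then show ?thesis
    by (simp add: emeasure_eq_measure zero_less_measure_iff)
qed

lemma M0_p:
  assumes "sg > 0"
  shows "measure (M0 mu sg) {0<..} = Phi (mu / sg)"
proof -
  let ?S = "density lborel std_normal_density"
  interpret S: prob_space ?S by (rule prob_space_normal_density) simp
  have d: "distributed ?S lborel (\<lambda>x. x) std_normal_density"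
    by (simp add: distributed_def distr_id2)
  have "distributed ?S lborel (\<lambda>x. mu + (- sg) * x) (normal_density (mu + (- sg) * 0) (\<bar>- sg\<bar> * 1))"
    by (rule S.normal_density_affine[OF d]) (use assms in auto)
  then have "distr ?S lborel (\<lambda>x. mu + (- sg) * x) = M0 mu sg"
    using assms by (simp add: distributed_def)
  then have "measure (M0 mu sg) {0<..} = measure (distr ?S lborel (\<lambda>x. mu + (- sg) * x)) {0<..}"
    by simp
  also have "\<dots> = measure ?S {x. 0 < mu + (- sg) * x}"
    by (subst measure_distr) (auto simp: vimage_def)
  also have "{x. 0 < mu + (- sg) * x} = {..< mu/sg}"
    using assms by (auto simp: field_simps)
  also have "measure ?S {..< mu/sg} = measure ?S {.. mu/sg}"
  proof -
    have "emeasure ?S {mu/sg} = 0"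
      by (simp add: emeasure_density)
    then have "measure ?S {mu/sg} = 0" by (simp add: measure_def)
    moreover have "{.. mu/sg} = {..< mu/sg} \<union> {mu/sg}" by auto
    moreover have "measure ?S ({..< mu/sg} \<union> {mu/sg}) = measure ?S {..< mu/sg} + measure ?S {mu/sg}"
      by (rule S.finite_measure_Union) auto
    ultimately show ?thesis
      by simp
  qed
  finally show ?thesis by (simp add: Phi_def cdf_def)
qed

definition cnt :: "nat set \<Rightarrow> (nat \<Rightarrow> real) \<Rightarrow> real" where
  "cnt I y = real (card {i\<in>I. 0 < y i})"

lemma cnt_sum: "finite I \<Longrightarrow> cnt I y = (\<Sum>i\<in>I. if 0 < y i then 1 else 0)"
  unfolding cnt_def by (simp add: sum.If_cases Int_def conj_commute)

locale vise =
  fixes mu sg :: real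
  assumes sg: "sg > 0"
begin

abbreviation PP :: "nat set \<Rightarrow> (nat \<Rightarrow> real) measure" where
  "PP I \<equiv> PiM I (\<lambda>_. M0 mu sg)"

lemma PP_prob: "prob_space (PP I)"
  by (rule prob_space_PiM) (rule M0_prob[OF sg])

lemma space_PP: "space (PP I) = PiE I (\<lambda>_. UNIV)"
  by (simp add: space_PiM)

lemma comp_meas: "i \<in> I \<Longrightarrow> (\<lambda>y. y i) \<in> borel_measurable (PP I)"
proof -
  assume "i \<in> I"
  then have "(\<lambda>y. y i) \<in> measurable (PP I) (M0 mu sg)"
    by (rule measurable_component_singleton)
  moreover have "sets (M0 mu sg) = sets borel" by simp
  ultimately show ?thesis using measurable_cong_sets[OF refl] by blast
qed

lemma comp_int: "i \<in> I \<Longrightarrow> integrable (PP I) (\<lambda>y. y i)"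
proof -
  assume i: "i \<in> I"
  have "distr (PP I) (M0 mu sg) (\<lambda>\<omega>. \<omega> i) = M0 mu sg"
    by (rule distr_PiM_component) (use i M0_prob[OF sg] in auto)
  then have "integrable (distr (PP I) (M0 mu sg) (\<lambda>\<omega>. \<omega> i)) (\<lambda>x. x)"
    using M0_integrable_id[OF sg] by simp
  then show ?thesis
    by (subst (asm) integrable_distr_eq) (auto intro: comp_meas[OF i])
qed

lemma cnt_meas: "finite I \<Longrightarrow> I \<subseteq> J \<Longrightarrow> cnt I \<in> borel_measurable (PP J)"
proof -
  assume "finite I" "I \<subseteq> J"
  then have "\<And>i. i \<in> I \<Longrightarrow> (\<lambda>y. if 0 < y i then 1 else 0 :: real) \<in> borel_measurable (PP J)"
  proof -
    fix i assume "i \<in> I"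
    have "(\<lambda>x::real. if 0 < x then 1 else 0 :: real) \<in> borel_measurable borel" by measurable
    then show "(\<lambda>y. if 0 < y i then 1 else 0 :: real) \<in> borel_measurable (PP J)"
      using measurable_compose[OF comp_meas] \<open>i \<in> I\<close> \<open>I \<subseteq> J\<close> by blast
  qed
  then have "(\<lambda>y. \<Sum>i\<in>I. if 0 < y i then 1 else 0 :: real) \<in> borel_measurable (PP J)"
    by (rule borel_measurable_sum)
  moreover have "cnt I = (\<lambda>y. \<Sum>i\<in>I. if 0 < y i then 1 else 0 :: real)"
    using \<open>finite I\<close> by (simp add: fun_eq_iff cnt_sum)
  ultimately show ?thesis by simp
qed

lemma q_eq: "measure (M0 mu sg) {..0} = 1 - Phi (mu / sg)"
proof -
  interpret prob_space "M0 mu sg" by (rule M0_prob[OF sg])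
  have "{..0::real} = space (M0 mu sg) - {0<..}" by auto
  then show ?thesis using prob_compl[of "{0<..}"] M0_p[OF sg] by simp
qed

lemma measB:
  assumes "finite I" "A \<subseteq> I"
  shows "measure (PP I) (PiE I (\<lambda>i. if i \<in> A then {0<..} else {..0}))
       = Phi (mu/sg) ^ card A * (1 - Phi (mu/sg)) ^ (card I - card A)"
proof -
  have pM: "prob_space (M0 mu sg)" by (rule M0_prob[OF sg])
  interpret finite_product_prob_space "\<lambda>_. M0 mu sg" I
    by (intro finite_product_prob_space.intro finite_product_sigma_finite.intro product_prob_space.intro
        product_sigma_finite.intro finite_product_sigma_finite_axioms.intro product_prob_space_axioms.intro)
       (simp_all add: assms(1) pM prob_space_imp_sigma_finite)
  have "measure (PP I) (PiE I (\<lambda>i. if i \<in> A then {0<..} else {..0}))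
     = (\<Prod>i\<in>I. measure (M0 mu sg) (if i \<in> A then {0<..} else {..0}))"
    by (rule finite_measure_PiM_emb) auto
  also have "\<dots> = (\<Prod>i\<in>I. if i \<in> A then Phi (mu/sg) else 1 - Phi (mu/sg))"
    by (intro prod.cong) (auto simp: M0_p[OF sg] q_eq)
  also have "\<dots> = Phi (mu/sg) ^ card (I \<inter> A) * (1 - Phi (mu/sg)) ^ card (I - A)"
    using assms(1) by (simp add: prod.If_cases Diff_eq)
  also have "card (I \<inter> A) = card A" using assms by (simp add: Int_absorb1)
  also have "card (I - A) = card I - card A" using assms by (simp add: card_Diff_subset finite_subset)
  finally show ?thesis .
qed

lemma prob_count:
  assumes fin: "finite I"
  shows "(\<integral>y. (if c < cnt I y then 1 else 0) \<partial>PP I)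
     = (\<Sum>k\<in>{k\<in>{0..card I}. c < real k}. real (card I choose k) * Phi (mu/sg) ^ k * (1 - Phi (mu/sg)) ^ (card I - k))"
proof -
  define B where "B A = PiE I (\<lambda>i. if i \<in> A then {0<..} else {..0::real})" for A
  define S where "S = {A. A \<subseteq> I \<and> c < real (card A)}"
  define p where "p = Phi (mu/sg)"
  interpret prob_space "PP I" by (rule PP_prob)
  have finS: "finite S" unfolding S_def using fin by (auto intro: finite_subset[of _ "Pow I"])
  have Bsets: "B A \<in> sets (PP I)" for A
    unfolding B_def using fin by (intro sets_PiM_I_finite) auto
  have pw: "(if c < cnt I y then 1 else 0) = (\<Sum>A\<in>S. indicator (B A) y :: real)" if y: "y \<in> space (PP I)" for y
  proof -
    define Y where "Y = {i\<in>I. 0 < y i}"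
    have "indicator (B A) y = (if Y = A then 1 else 0 :: real)" if "A \<in> S" for A
    proof -
      have AI: "A \<subseteq> I" using that by (simp add: S_def)
      have "y \<in> B A \<longleftrightarrow> Y = A"
        using y AI unfolding B_def Y_def space_PP
        by (auto simp: PiE_iff split: if_splits)
      then show ?thesis by (simp add: indicator_def)
    qed
    then have "(\<Sum>A\<in>S. indicator (B A) y :: real) = (\<Sum>A\<in>S. if Y = A then 1 else 0 :: real)"
      by (intro sum.cong) auto
    also have "\<dots> = (if Y \<in> S then 1 else 0)" using finS by simp
    also have "(Y \<in> S) = (c < cnt I y)" by (simp add: S_def Y_def cnt_def)
    finally show ?thesis by simp
  qed
  have "(\<integral>y. (if c < cnt I y then 1 else 0) \<partial>PP I) = (\<integral>y. (\<Sum>A\<in>S. indicator (B A) y :: real) \<partial>PP I)"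
    by (rule Bochner_Integration.integral_cong[OF refl]) (rule pw)
  also have "\<dots> = (\<Sum>A\<in>S. \<integral>y. (indicator (B A) y :: real) \<partial>PP I)"
    by (rule Bochner_Integration.integral_sum) (auto intro!: integrable_real_indicator Bsets simp: less_top[symmetric])
  also have "\<dots> = (\<Sum>A\<in>S. p ^ card A * (1 - p) ^ (card I - card A))"
  proof (rule sum.cong[OF refl])
    fix A assume "A \<in> S"
    then have "A \<subseteq> I" by (simp add: S_def)
    have "(\<integral>y. (indicator (B A) y :: real) \<partial>PP I) = measure (PP I) (B A)"
      using Bsets[of A] by (simp add: Int_absorb2 sets.sets_into_space)
    also have "\<dots> = p ^ card A * (1 - p) ^ (card I - card A)"
      unfolding B_def p_def by (rule measB[OF fin \<open>A \<subseteq> I\<close>])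
    finally show "(\<integral>y. (indicator (B A) y :: real) \<partial>PP I) = p ^ card A * (1 - p) ^ (card I - card A)" .
  qed
  also have "\<dots> = (\<Sum>k\<in>{k\<in>{0..card I}. c < real k}. \<Sum>A\<in>{A. A \<in> S \<and> card A = k}. p ^ card A * (1 - p) ^ (card I - card A))"
    by (rule sum.group[symmetric]) (use finS fin in \<open>auto simp: S_def intro: card_mono\<close>)
  also have "\<dots> = (\<Sum>k\<in>{k\<in>{0..card I}. c < real k}. real (card I choose k) * p ^ k * (1 - p) ^ (card I - k))"
  proof (rule sum.cong[OF refl])
    fix k assume k: "k \<in> {k\<in>{0..card I}. c < real k}"
    have "{A. A \<in> S \<and> card A = k} = {A. A \<subseteq> I \<and> card A = k}" using k by (auto simp: S_def)
    then show "(\<Sum>A\<in>{A. A \<in> S \<and> card A = k}. p ^ card A * (1 - p) ^ (card I - card A))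
       = real (card I choose k) * p ^ k * (1 - p) ^ (card I - k)"
      using n_subsets[OF fin, of k] by simp
  qed
  finally show ?thesis by (simp add: p_def)
qed

end



lemma key_alg:
  fixes a g d X S :: real
  assumes "g > 0" "d > 0"
  shows "(a / g) / d * X < S / g \<longleftrightarrow> 0 < S * d - a * X"
proof -
  have "(a / g) / d * X < S / g \<longleftrightarrow> ((a / g) / d * X) * (g * d) < (S / g) * (g * d)"
    using assms by (intro mult_less_cancel_right_pos[symmetric]) simp
  also have "((a / g) / d * X) * (g * d) = a * X" using assms by (simp add: field_simps)
  also have "(S / g) * (g * d) = S * d" using assms by (simp add: field_simps)
  finally show ?thesis by simp
qed

context vise begin

lemma ind_meas: "finite I \<Longrightarrow> I \<subseteq> J \<Longrightarrow> (\<lambda>y. if c < cnt I y then 1 else 0 :: real) \<in> borel_measurable (PP J)"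
proof -
  assume "finite I" "I \<subseteq> J"
  from cnt_meas[OF this] have "cnt I \<in> borel_measurable (PP J)" .
  moreover have "(\<lambda>x::real. if c < x then 1 else 0 :: real) \<in> borel_measurable borel" by measurable
  ultimately show ?thesis using measurable_compose by blast
qed

lemma ind_int: "finite I \<Longrightarrow> I \<subseteq> J \<Longrightarrow> integrable (PP J) (\<lambda>y. if c < cnt I y then 1 else 0 :: real)"
proof -
  assume a: "finite I" "I \<subseteq> J"
  interpret prob_space "PP J" by (rule PP_prob)
  show ?thesis
    by (rule integrable_const_bound[where B=1]) (auto intro: ind_meas[OF a])
qed

lemma comp_ind_int: "finite I \<Longrightarrow> I \<subseteq> J \<Longrightarrow> j \<in> J \<Longrightarrow>
   integrable (PP J) (\<lambda>y. y j * (if c < cnt I y then 1 else 0 :: real))"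
proof -
  assume a: "finite I" "I \<subseteq> J" and j: "j \<in> J"
  show ?thesis
  proof (rule Bochner_Integration.integrable_bound[where f="\<lambda>y. y j"])
    show "integrable (PP J) (\<lambda>y. y j)" by (rule comp_int[OF j])
    show "(\<lambda>y. y j * (if c < cnt I y then 1 else 0 :: real)) \<in> borel_measurable (PP J)"
      by (intro borel_measurable_times comp_meas[OF j] ind_meas[OF a])
    show "AE y in PP J. norm (y j * (if c < cnt I y then 1 else 0 :: real)) \<le> norm (y j)"
      by auto
  qed
qed

lemma sym_int:
  assumes fin: "finite I" and i: "i \<in> I" and j: "j \<in> I"
  shows "(\<integral>y. y i * (if c < cnt I y then 1 else 0 :: real) \<partial>PP I)
       = (\<integral>y. y j * (if c < cnt I y then 1 else 0 :: real) \<partial>PP I)"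
proof -
  define f where "f k = (if k = i then j else if k = j then i else k)" for k
  define g where "g y = y j * (if c < cnt I y then 1 else 0 :: real)" for y
  have injf: "inj f" unfolding f_def inj_on_def by auto
  have fI: "f \<in> I \<rightarrow> I" using i j by (auto simp: f_def)
  have ff: "f (f k) = k" for k by (auto simp: f_def)
  have D: "distr (PP I) (PP I) (\<lambda>\<omega>. \<lambda>n\<in>I. \<omega> (f n)) = PP I"
    using distr_PiM_reindex[of I "\<lambda>_. M0 mu sg" f I] M0_prob[OF sg] injf fI
    by (auto intro: inj_on_subset)
  have mt: "(\<lambda>\<omega>. \<lambda>n\<in>I. \<omega> (f n)) \<in> measurable (PP I) (PP I)"
    by (rule measurable_restrict) (use fI in \<open>auto simp: Pi_iff intro!: comp_meas\<close>)
  have gm: "g \<in> borel_measurable (PP I)"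
    unfolding g_def by (intro borel_measurable_times comp_meas[OF j] ind_meas[OF fin]) auto
  have "(\<integral>y. g y \<partial>PP I) = (\<integral>y. g y \<partial>distr (PP I) (PP I) (\<lambda>\<omega>. \<lambda>n\<in>I. \<omega> (f n)))"
    by (simp add: D)
  also have "\<dots> = (\<integral>\<omega>. g (\<lambda>n\<in>I. \<omega> (f n)) \<partial>PP I)"
    by (rule integral_distr[OF mt gm])
  also have "\<dots> = (\<integral>y. y i * (if c < cnt I y then 1 else 0 :: real) \<partial>PP I)"
  proof (rule Bochner_Integration.integral_cong[OF refl])
    fix \<omega> assume "\<omega> \<in> space (PP I)"
    have "{k\<in>I. 0 < (\<lambda>n\<in>I. \<omega> (f n)) k} = f ` {k\<in>I. 0 < \<omega> k}"
    proof safe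
      fix k assume "k \<in> I" "0 < (\<lambda>n\<in>I. \<omega> (f n)) k"
      then show "k \<in> f ` {k \<in> I. 0 < \<omega> k}"
        using fI ff by (auto intro!: image_eqI[of k f "f k"])
    qed (use fI ff in auto)
    then have "cnt I (\<lambda>n\<in>I. \<omega> (f n)) = cnt I \<omega>"
      unfolding cnt_def using injf by (simp add: card_image inj_on_subset)
    moreover have "f j = i" by (simp add: f_def)
    ultimately show "g (\<lambda>n\<in>I. \<omega> (f n)) = \<omega> i * (if c < cnt I \<omega> then 1 else 0)"
      unfolding g_def using j by simp
  qed
  finally show ?thesis unfolding g_def by simp
qed

lemma inner_formula:
  assumes fin: "finite E" and z: "0 \<in> E"
  shows "(\<integral>y. (sum y E + S) * ((if c1 < cnt E y then 1 else 0) - (if c2 < cnt E y then 1 else 0)) \<partial>PP E)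
    = real (card E) * ((\<integral>y. y 0 * (if c1 < cnt E y then 1 else 0) \<partial>PP E) - (\<integral>y. y 0 * (if c2 < cnt E y then 1 else 0) \<partial>PP E))
      + S * ((\<integral>y. (if c1 < cnt E y then 1 else 0) \<partial>PP E) - (\<integral>y. (if c2 < cnt E y then 1 else 0) \<partial>PP E))"
proof -
  define i1 where "i1 y = (if c1 < cnt E y then 1 else 0 :: real)" for y
  define i2 where "i2 y = (if c2 < cnt E y then 1 else 0 :: real)" for y
  have I1: "integrable (PP E) i1" unfolding i1_def by (rule ind_int[OF fin]) simp
  have I2: "integrable (PP E) i2" unfolding i2_def by (rule ind_int[OF fin]) simp
  have J1: "integrable (PP E) (\<lambda>y. y i * i1 y)" if "i \<in> E" for i
    unfolding i1_def by (rule comp_ind_int[OF fin _ that]) simp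
  have J2: "integrable (PP E) (\<lambda>y. y i * i2 y)" if "i \<in> E" for i
    unfolding i2_def by (rule comp_ind_int[OF fin _ that]) simp
  have pw: "(sum y E + S) * (i1 y - i2 y) = (\<Sum>i\<in>E. y i * i1 y - y i * i2 y) + (S * i1 y - S * i2 y)" for y
  proof -
    have "(\<Sum>i\<in>E. y i * i1 y - y i * i2 y) = sum y E * i1 y - sum y E * i2 y"
      by (simp add: sum_subtractf sum_distrib_right)
    then show ?thesis by (simp add: algebra_simps)
  qed
  have "(\<integral>y. (sum y E + S) * (i1 y - i2 y) \<partial>PP E)
     = (\<integral>y. (\<Sum>i\<in>E. y i * i1 y - y i * i2 y) + (S * i1 y - S * i2 y) \<partial>PP E)"
    by (simp add: pw)
  also have "\<dots> = (\<integral>y. (\<Sum>i\<in>E. y i * i1 y - y i * i2 y) \<partial>PP E) + (\<integral>y. S * i1 y - S * i2 y \<partial>PP E)"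
    by (rule Bochner_Integration.integral_add) (use I1 I2 J1 J2 in auto)
  also have "(\<integral>y. (\<Sum>i\<in>E. y i * i1 y - y i * i2 y) \<partial>PP E) = (\<Sum>i\<in>E. \<integral>y. y i * i1 y - y i * i2 y \<partial>PP E)"
    by (rule Bochner_Integration.integral_sum) (use J1 J2 in auto)
  also have "\<dots> = (\<Sum>i\<in>E. (\<integral>y. y 0 * i1 y \<partial>PP E) - (\<integral>y. y 0 * i2 y \<partial>PP E))"
  proof (rule sum.cong[OF refl])
    fix i assume i: "i \<in> E"
    have "(\<integral>y. y i * i1 y - y i * i2 y \<partial>PP E) = (\<integral>y. y i * i1 y \<partial>PP E) - (\<integral>y. y i * i2 y \<partial>PP E)"
      by (rule Bochner_Integration.integral_diff) (use J1 J2 i in auto)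
    also have "\<dots> = (\<integral>y. y 0 * i1 y \<partial>PP E) - (\<integral>y. y 0 * i2 y \<partial>PP E)"
      unfolding i1_def i2_def using sym_int[OF fin i z] by simp
    finally show "(\<integral>y. y i * i1 y - y i * i2 y \<partial>PP E) = (\<integral>y. y 0 * i1 y \<partial>PP E) - (\<integral>y. y 0 * i2 y \<partial>PP E)" .
  qed
  also have "(\<integral>y. S * i1 y - S * i2 y \<partial>PP E) = S * ((\<integral>y. i1 y \<partial>PP E) - (\<integral>y. i2 y \<partial>PP E))"
    using I1 I2 by (simp add: right_diff_distrib)
  finally show ?thesis unfolding i1_def i2_def by simp
qed

lemma main_ineq:
  fixes n l :: nat and alpha t t0 :: real
  assumes l1: "1 \<le> l" and ln: "l < n" and a0: "0 \<le> alpha"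
  assumes dpos: "0 < (\<integral>y. (if alpha * real n - real (n - l) < cnt {..<l} y then 1 else 0 :: real) \<partial>PP {..<l})
                    - (\<integral>y. (if alpha * real n < cnt {..<l} y then 1 else 0 :: real) \<partial>PP {..<l})"
  assumes t0: "t0 = (real l / real (n - l)) /
       ((\<integral>y. (if alpha * real n - real (n - l) < cnt {..<l} y then 1 else 0 :: real) \<partial>PP {..<l})
                    - (\<integral>y. (if alpha * real n < cnt {..<l} y then 1 else 0 :: real) \<partial>PP {..<l}))
     * ((\<integral>y. y 0 * (if alpha * real n < cnt {..<l} y then 1 else 0 :: real) \<partial>PP {..<l})
       - (\<integral>y. y 0 * (if alpha * real n - real (n - l) < cnt {..<l} y then 1 else 0 :: real) \<partial>PP {..<l}))"
  shows "(\<integral>\<zeta>. (\<Sum>i<n. \<zeta> i) * (if alpha * real n < cnt {..<l} \<zeta> + (if t < (\<Sum>i\<in>{l..<n}. \<zeta> i) / real (n - l) then real (n - l) else 0) then 1 else 0 :: real) \<partial>PP {..<n})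
       \<le> (\<integral>\<zeta>. (\<Sum>i<n. \<zeta> i) * (if alpha * real n < cnt {..<l} \<zeta> + (if t0 < (\<Sum>i\<in>{l..<n}. \<zeta> i) / real (n - l) then real (n - l) else 0) then 1 else 0 :: real) \<partial>PP {..<n})"
proof -
  define g where "g = real (n - l)"
  define E where "E = {..<l}"
  define G where "G = {l..<n}"
  define cg where "cg = alpha * real n - g"
  define an where "an = alpha * real n"
  define mp where "mp c = (\<integral>y. y 0 * (if c < cnt E y then 1 else 0 :: real) \<partial>PP E)" for c
  define FF where "FF c = (\<integral>y. (if c < cnt E y then 1 else 0 :: real) \<partial>PP E)" for c
  define V where "V s \<zeta> = cnt E \<zeta> + (if s < (\<Sum>i\<in>G. \<zeta> i) / g then g else 0)" for s \<zeta>
  define hs where "hs s \<zeta> = (\<Sum>i<n. \<zeta> i) * (if an < V s \<zeta> then 1 else 0 :: real)" for s \<zeta>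
  have gpos: "g > 0" using ln by (simp add: g_def)
  have U: "{..<n} = G \<union> E" and GE: "G \<inter> E = {}" using ln by (auto simp: G_def E_def)
  have finE: "finite E" and finG: "finite G" by (auto simp: E_def G_def)
  have cardE: "card E = l" by (simp add: E_def)
  have zE: "0 \<in> E" using l1 by (simp add: E_def)
  have Dl: "FF cg - FF an > 0" using dpos by (simp add: FF_def cg_def an_def g_def E_def)
  have t0': "t0 = (real l / g) / (FF cg - FF an) * (mp an - mp cg)"
    using t0 by (simp add: FF_def mp_def cg_def an_def g_def E_def)
  have compm[measurable]: "(\<lambda>\<zeta>. \<zeta> i) \<in> borel_measurable (PP {..<n})" if "i < n" for i
    using comp_meas[of i "{..<n}"] that by simp
  have cntm[measurable]: "cnt E \<in> borel_measurable (PP {..<n})"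
    by (rule cnt_meas) (use finE ln in \<open>auto simp: E_def\<close>)
  have sGm[measurable]: "(\<lambda>\<zeta>. \<Sum>i\<in>G. \<zeta> i) \<in> borel_measurable (PP {..<n})"
    by (rule borel_measurable_sum) (auto simp: G_def intro: compm)
  have indm: "(\<lambda>\<zeta>. if an < V s \<zeta> then 1 else 0 :: real) \<in> borel_measurable (PP {..<n})" for s
    unfolding V_def by measurable
  have hs_sum: "hs s = (\<lambda>\<zeta>. \<Sum>i<n. \<zeta> i * (if an < V s \<zeta> then 1 else 0 :: real))" for s
    by (simp add: hs_def fun_eq_iff sum_distrib_right)
  have int_hs: "integrable (PP {..<n}) (hs s)" for s
    unfolding hs_sum
  proof (rule Bochner_Integration.integrable_sum)
    fix i assume i: "i \<in> {..<n}"
    show "integrable (PP {..<n}) (\<lambda>\<zeta>. \<zeta> i * (if an < V s \<zeta> then 1 else 0 :: real))"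
      by (rule Bochner_Integration.integrable_bound[where f="\<lambda>\<zeta>. \<zeta> i"])
         (use i in \<open>auto intro: comp_int borel_measurable_times indm compm\<close>)
  qed
  interpret PS: product_sigma_finite "\<lambda>_. M0 mu sg"
    by (rule product_sigma_finite.intro) (simp add: prob_space_imp_sigma_finite M0_prob[OF sg])
  have "0 \<le> (\<integral>\<zeta>. hs t0 \<zeta> - hs t \<zeta> \<partial>PP {..<n})"
  proof -
    have "(\<integral>\<zeta>. hs t0 \<zeta> - hs t \<zeta> \<partial>PP {..<n})
       = (\<integral>x. (\<integral>y. hs t0 (merge G E (x, y)) - hs t (merge G E (x, y)) \<partial>PP E) \<partial>PP G)"
      unfolding U by (rule PS.product_integral_fold[OF GE finG finE])
        (use int_hs[of t0] int_hs[of t] U in auto)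
    also have "\<dots> \<ge> 0"
    proof (rule Bochner_Integration.integral_nonneg)
      fix x assume x: "x \<in> space (PP G)"
      define Sx where "Sx = (\<Sum>i\<in>G. x i)"
      define D where "D = real l * (mp cg - mp an) + Sx * (FF cg - FF an)"
      have mg: "merge G E (x, y) i = x i" if "i \<in> G" for i y using that by (simp add: merge_def)
      have me: "merge G E (x, y) i = y i" if "i \<in> E" for i y using that GE by (auto simp: merge_def)
      have sum_m: "(\<Sum>i<n. merge G E (x, y) i) = sum y E + Sx" for y
        unfolding U Sx_def using finG finE GE
        by (simp add: sum.union_disjoint mg me add.commute)
      have cnt_m: "cnt E (merge G E (x, y)) = cnt E y" for y
        unfolding cnt_def using me by (metis (no_types, lifting) mem_Collect_eq)
      have sG_m: "(\<Sum>i\<in>G. merge G E (x, y) i) = Sx" for y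
        unfolding Sx_def by (simp add: mg)
      have pw: "hs s (merge G E (x, y)) = (sum y E + Sx) *
          (if an < cnt E y + (if s < Sx / g then g else 0) then 1 else 0)" for s y
        unfolding hs_def V_def sum_m cnt_m sG_m ..
      have key: "t0 < Sx / g \<longleftrightarrow> 0 < D"
        unfolding t0' key_alg[OF gpos Dl] D_def by (simp add: algebra_simps)
      have shift: "an < c + g \<longleftrightarrow> cg < c" for c unfolding cg_def an_def by auto
      show "0 \<le> (\<integral>y. hs t0 (merge G E (x, y)) - hs t (merge G E (x, y)) \<partial>PP E)"
      proof (cases "(t0 < Sx / g) = (t < Sx / g)")
        case True
        then show ?thesis by (simp add: pw)
      next
        case False
        show ?thesis
        proof (cases "t0 < Sx / g")
          case True
          with False have nt: "\<not> t < Sx / g" by simp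
          have "(\<integral>y. hs t0 (merge G E (x, y)) - hs t (merge G E (x, y)) \<partial>PP E)
             = (\<integral>y. (sum y E + Sx) * ((if cg < cnt E y then 1 else 0) - (if an < cnt E y then 1 else 0)) \<partial>PP E)"
            by (rule Bochner_Integration.integral_cong[OF refl]) (simp add: pw True nt shift right_diff_distrib)
          also have "\<dots> = D"
            unfolding inner_formula[OF finE zE] D_def mp_def FF_def cardE ..
          finally show ?thesis using key True by simp
        next
          case False2: False
          with False have nt: "t < Sx / g" by simp
          have "(\<integral>y. hs t0 (merge G E (x, y)) - hs t (merge G E (x, y)) \<partial>PP E)
             = (\<integral>y. (sum y E + Sx) * ((if an < cnt E y then 1 else 0) - (if cg < cnt E y then 1 else 0)) \<partial>PP E)"
            by (rule Bochner_Integration.integral_cong[OF refl]) (simp add: pw False2 nt shift right_diff_distrib)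
          also have "\<dots> = - D"
            unfolding inner_formula[OF finE zE] D_def mp_def FF_def cardE by (simp add: algebra_simps)
          finally show ?thesis using key False2 by simp
        qed
      qed
    qed
    finally show ?thesis .
  qed
  also have "(\<integral>\<zeta>. hs t0 \<zeta> - hs t \<zeta> \<partial>PP {..<n}) = (\<integral>\<zeta>. hs t0 \<zeta> \<partial>PP {..<n}) - (\<integral>\<zeta>. hs t \<zeta> \<partial>PP {..<n})"
    by (rule Bochner_Integration.integral_diff[OF int_hs int_hs])
  finally show ?thesis
    unfolding hs_def V_def an_def g_def E_def G_def by simp
qed

end



context vise begin

lemma p_bounds: "0 < Phi (mu/sg)" "Phi (mu/sg) < 1"
proof -
  have "emeasure lborel {1..2::real} \<le> emeasure lborel ({0<..} :: real set)" by (rule emeasure_mono) auto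
  then have "emeasure lborel ({0<..} :: real set) \<noteq> 0" by auto
  then have "0 < measure (M0 mu sg) {0<..}" by (intro M0_pos[OF sg]) auto
  then show "0 < Phi (mu/sg)" using M0_p[OF sg] by simp
  have "emeasure lborel {-2..-1::real} \<le> emeasure lborel ({..0} :: real set)" by (rule emeasure_mono) auto
  then have "emeasure lborel ({..0} :: real set) \<noteq> 0" by auto
  then have "0 < measure (M0 mu sg) {..0}" by (intro M0_pos[OF sg]) auto
  then show "Phi (mu/sg) < 1" using q_eq by simp
qed

lemma F_xi_eq:
  "F_xi mu sg l c = (\<integral>y. (if c < cnt {..<l} y then 1 else 0 :: real) \<partial>PP {..<l})"
proof -
  have "{nat (max 0 (\<lfloor>c\<rfloor> + 1))..l} = {k\<in>{0..card {..<l}}. c < real k}"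
  proof safe
    fix k assume "k \<in> {nat (max 0 (\<lfloor>c\<rfloor> + 1))..l}"
    then have "\<lfloor>c\<rfloor> + 1 \<le> int k" by auto
    then show "c < real k" using floor_less_iff[of c "int k"] by simp
  next
    fix k assume "k \<in> {0..card {..<l}}" "c < real k"
    then show "k \<in> {nat (max 0 (\<lfloor>c\<rfloor> + 1))..l}"
      by (auto simp: floor_less_iff[symmetric] nat_le_iff) linarith
  qed auto
  then show ?thesis
    unfolding prob_count[of "{..<l}" c, simplified] F_xi_def Let_def by simp
qed

lemma mu_plus_eq:
  "mu_plus mu sg l c = (\<integral>y. y 0 * (if c < cnt {..<l} y then 1 else 0 :: real) \<partial>PP {..<l})"
  unfolding mu_plus_def iid_normal_def cnt_def by simp

lemma Fdiff_pos:
  fixes a :: real and gg :: nat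
  assumes a0: "0 \<le> a" and al: "a < real l + real gg" and g1: "1 \<le> gg"
  shows "0 < F_xi mu sg l (a - real gg) - F_xi mu sg l a"
proof -
  define p where "p = Phi (mu/sg)"
  have p0: "0 < p" and p1: "p < 1" using p_bounds by (auto simp: p_def)
  define tm where "tm k = real (l choose k) * p ^ k * (1 - p) ^ (l - k)" for k
  define lo where "lo = nat (max 0 (\<lfloor>a - real gg\<rfloor> + 1))"
  define hi where "hi = nat (max 0 (\<lfloor>a\<rfloor> + 1))"
  have fl1: "real_of_int \<lfloor>a - real gg\<rfloor> \<le> a - real gg" by (rule of_int_floor_le)
  have fl2: "a < real_of_int \<lfloor>a\<rfloor> + 1" by (rule real_of_int_floor_add_one_gt)
  have fa: "0 \<le> \<lfloor>a\<rfloor>" using a0 by simp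
  have "real_of_int \<lfloor>a - real gg\<rfloor> < real_of_int (\<lfloor>a\<rfloor> + 1 - int gg)" using fl1 fl2 by linarith
  then have fc: "\<lfloor>a - real gg\<rfloor> < \<lfloor>a\<rfloor> + 1 - int gg" by (simp only: of_int_less_iff)
  have lohi: "lo < hi" unfolding lo_def hi_def using fc fa g1 by simp
  have "\<lfloor>a - real gg\<rfloor> < int l" using al by (simp add: floor_less_iff)
  then have lol: "lo \<le> l" unfolding lo_def by simp
  have nn: "0 \<le> tm k" for k using p0 p1 by (simp add: tm_def)
  have Fc: "F_xi mu sg l (a - real gg) = sum tm {lo..l}" unfolding F_xi_def Let_def tm_def lo_def p_def ..
  have Fa: "F_xi mu sg l a = sum tm {hi..l}" unfolding F_xi_def Let_def tm_def hi_def p_def ..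
  have "sum tm (insert lo {hi..l}) \<le> sum tm {lo..l}"
    by (rule sum_mono2) (use lohi lol nn in auto)
  moreover have "sum tm (insert lo {hi..l}) = tm lo + sum tm {hi..l}" using lohi by simp
  moreover have "0 < tm lo" using p0 p1 lol by (simp add: tm_def)
  ultimately show ?thesis unfolding Fc Fa by simp
qed

end

theorem mainTheorem3:
  fixes n l :: nat and mu sg alpha :: real
  assumes "1 \<le> l" and "l \<le> n - 1" and "sg > 0"
    and "0 \<le> alpha" and "alpha < 1"
  defines "delta \<equiv> real l / real n"
  defines "gamma \<equiv> alpha + delta - 1"
  defines "beta \<equiv> real l / real (n - l)"
  defines "t0 \<equiv> beta / (F_xi mu sg l (gamma * real n) - F_xi mu sg l (alpha * real n))
                 * (mu_plus mu sg l (alpha * real n) - mu_plus mu sg l (gamma * real n))"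
  shows "\<forall>t::real. expected_increment n l mu sg alpha t \<le> expected_increment n l mu sg alpha t0"
proof -
  have ln: "l < n" using assms(1,2) by linarith
  interpret vise mu sg by (rule vise.intro) (rule assms(3))
  have n0: "real n > 0" using ln by simp
  have gam: "gamma * real n = alpha * real n - real (n - l)"
    unfolding gamma_def delta_def using ln n0 by (simp add: of_nat_diff field_simps)
  have EI: "expected_increment n l mu sg alpha t =
     (\<integral>\<zeta>. (\<Sum>i<n. \<zeta> i) * (if alpha * real n < cnt {..<l} \<zeta> + (if t < (\<Sum>i\<in>{l..<n}. \<zeta> i) / real (n - l) then real (n - l) else 0) then 1 else 0 :: real) \<partial>PP {..<n})" for t
    unfolding expected_increment_def iid_normal_def
    by (rule Bochner_Integration.integral_cong[OF refl]) (simp add: accepted_def votes_for_def cnt_def)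
  have "alpha * real n < real n" using assms(5) n0 by simp
  then have al: "alpha * real n < real l + real (n - l)" using ln by simp
  have dpos: "0 < F_xi mu sg l (alpha * real n - real (n - l)) - F_xi mu sg l (alpha * real n)"
    by (rule Fdiff_pos) (use al assms(4) n0 ln in auto)
  note main = main_ineq[OF assms(1) ln assms(4), of t0]
  show ?thesis
  proof
    fix t
    show "expected_increment n l mu sg alpha t \<le> expected_increment n l mu sg alpha t0"
      unfolding EI
      by (rule main) (use dpos in \<open>simp_all add: t0_def beta_def gam F_xi_eq mu_plus_eq\<close>)
  qed
qed

end
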